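(* Let $\mathbb{K}$ be a field, let $P_1, P_2 \in \mathbb{K}[X]$ be irreducible, let $n > 1$, and let $f : \mathbb{K}[X]/(P_1) \to \mathbb{K}[X]/(P_2)$ be a ring isomorphism stabilizing $\mathbb{K}$. Then the ring homomorphism $f_{X,n} : \mathbb{K}[X]/(P_1^n) \to \mathbb{K}[X]/(P_2^n)$ is an isomorphism (stabilizing $\mathbb{K}$) if and only if $Q_f' \neq 0$.
   Context: A ring homomorphism $f : A \to B$ between $\mathbb{K}$-algebras stabilizes $\mathbb{K}$ if there is a field automorphism $\sigma_f$ of $\mathbb{K}$ with $f(a) = \sigma_f(a)$ for all $a \in \mathbb{K}$. For a field automorphism $\sigma$ of $\mathbb{K}$, $\sigma^X$ is the ring automorphism of $\mathbb{K}[X]$ applying $\sigma$ to coefficients; $A\circ Q$ denotes $A(Q(X))$; $'$ denotes the formal derivative. For a ring isomorphism $f : \mathbb{K}[X]/(P_1) \to \mathbb{K}[X]/(P_2)$ stabilizing $\mathbb{K}$: $Q_f$ is the unique polynomial of degree $< \deg P_2$ such that $f$ sends the class of $X$ to the class of $Q_f$, and $f_{X,n} : \mathbb{K}[X]/(P_1^n) \to \mathbb{K}[X]/(P_2^n)$ is the well-defined ring homomorphism sending the class of $P$ to the class of $\sigma_f^X(P)\circ Q_f$. *)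

theory Defs
  imports "HOL-Computational_Algebra.Polynomial_Factorial"
begin

text \<open>The quotient ring K[X]/(P) is modelled by the set of canonical representatives
  p mod P. A map f on polynomials represents a map of quotient rings when it only depends
  on the class (f p = f (p mod P1)) and takes canonical representatives as values.\<close>

definition qcarrier :: "'a::field poly \<Rightarrow> 'a poly set" where
  "qcarrier P = range (\<lambda>p. p mod P)"

definition qring_hom :: "'a::field poly \<Rightarrow> 'a poly \<Rightarrow> ('a poly \<Rightarrow> 'a poly) \<Rightarrow> bool" where
  "qring_hom P1 P2 f \<longleftrightarrow>
     (\<forall>p. f p = f (p mod P1)) \<and> (\<forall>p. f p mod P2 = f p) \<and>
     f 1 = 1 mod P2 \<and>
     (\<forall>p q. f (p + q) = f p + f q) \<and>
     (\<forall>p q. f (p * q) = (f p * f q) mod P2)"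

definition qring_iso :: "'a::field poly \<Rightarrow> 'a poly \<Rightarrow> ('a poly \<Rightarrow> 'a poly) \<Rightarrow> bool" where
  "qring_iso P1 P2 f \<longleftrightarrow> qring_hom P1 P2 f \<and> bij_betw f (qcarrier P1) (qcarrier P2)"

definition field_aut :: "('a::field \<Rightarrow> 'a) \<Rightarrow> bool" where
  "field_aut \<sigma> \<longleftrightarrow> bij \<sigma> \<and> \<sigma> 1 = 1 \<and> (\<forall>a b. \<sigma> (a + b) = \<sigma> a + \<sigma> b) \<and>
     (\<forall>a b. \<sigma> (a * b) = \<sigma> a * \<sigma> b)"

definition stabilizes_K :: "'a::field poly \<Rightarrow> ('a poly \<Rightarrow> 'a poly) \<Rightarrow> bool" where
  "stabilizes_K P2 f \<longleftrightarrow> (\<exists>\<sigma>. field_aut \<sigma> \<and> (\<forall>a. f [:a:] = [:\<sigma> a:] mod P2))"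

definition sigma_f :: "'a::field poly \<Rightarrow> ('a poly \<Rightarrow> 'a poly) \<Rightarrow> 'a \<Rightarrow> 'a" where
  "sigma_f P2 f = (THE \<sigma>. field_aut \<sigma> \<and> (\<forall>a. f [:a:] = [:\<sigma> a:] mod P2))"

definition Q_f :: "'a::field poly \<Rightarrow> ('a poly \<Rightarrow> 'a poly) \<Rightarrow> 'a poly" where
  "Q_f P2 f = (THE Q. (Q = 0 \<or> degree Q < degree P2) \<and> f [:0, 1:] mod P2 = Q mod P2)"

definition f_Xn :: "'a::field poly \<Rightarrow> 'a poly \<Rightarrow> ('a poly \<Rightarrow> 'a poly) \<Rightarrow> nat \<Rightarrow> 'a poly \<Rightarrow> 'a poly" where
  "f_Xn P1 P2 f n p =
     pcompose (map_poly (sigma_f P2 f) (p mod P1 ^ n)) (Q_f P2 f) mod P2 ^ n"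

end

theory Submission imports Defs begin

lemma fa_0: "field_aut \<sigma> \<Longrightarrow> \<sigma> 0 = 0"
  unfolding field_aut_def by (metis add_cancel_right_right add_0)

lemma fa_add: "field_aut \<sigma> \<Longrightarrow> \<sigma> (a + b) = \<sigma> a + \<sigma> b"
  unfolding field_aut_def by blast
lemma fa_mult: "field_aut \<sigma> \<Longrightarrow> \<sigma> (a * b) = \<sigma> a * \<sigma> b"
  unfolding field_aut_def by blast
lemma fa_1: "field_aut \<sigma> \<Longrightarrow> \<sigma> 1 = 1"
  unfolding field_aut_def by blast
lemma fa_diff: "field_aut \<sigma> \<Longrightarrow> \<sigma> (a - b) = \<sigma> a - \<sigma> b"
  by (metis fa_add diff_add_cancel eq_diff_eq)
lemma fa_of_nat: "field_aut \<sigma> \<Longrightarrow> \<sigma> (of_nat n) = of_nat n"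
  by (induction n) (simp_all add: fa_0 fa_add fa_1)

lemma fa_of_nat_Suc: "field_aut \<sigma> \<Longrightarrow> \<sigma> (1 + of_nat n) = 1 + of_nat n"
  using fa_of_nat[of \<sigma> "Suc n"] by simp

lemma mp_add: "field_aut \<sigma> \<Longrightarrow> map_poly \<sigma> (p + q) = map_poly \<sigma> p + map_poly \<sigma> q"
  by (intro poly_eqI) (simp add: coeff_map_poly fa_0 fa_add)
lemma mp_diff: "field_aut \<sigma> \<Longrightarrow> map_poly \<sigma> (p - q) = map_poly \<sigma> p - map_poly \<sigma> q"
  by (intro poly_eqI) (simp add: coeff_map_poly fa_0 fa_diff)
lemma mp_smult: "field_aut \<sigma> \<Longrightarrow> map_poly \<sigma> (smult c p) = smult (\<sigma> c) (map_poly \<sigma> p)"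
  by (rule map_poly_smult) (simp_all add: fa_0 fa_mult)
lemma mp_mult: "field_aut \<sigma> \<Longrightarrow> map_poly \<sigma> (p * q) = map_poly \<sigma> p * map_poly \<sigma> q"
proof (induction p)
  case (pCons a p)
  then show ?case
    by (simp add: mult_pCons_left mp_add mp_smult map_poly_pCons fa_0)
qed simp
lemma mp_1: "field_aut \<sigma> \<Longrightarrow> map_poly \<sigma> 1 = 1"
  by (simp add: fa_1)
lemma mp_const: "field_aut \<sigma> \<Longrightarrow> map_poly \<sigma> [:a:] = [:\<sigma> a:]"
  by (simp add: map_poly_pCons fa_0)
lemma mp_pow: "field_aut \<sigma> \<Longrightarrow> map_poly \<sigma> (p ^ k) = map_poly \<sigma> p ^ k"
  by (induction k) (simp_all add: mp_mult fa_1)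
lemma mp_pcompose: "field_aut \<sigma> \<Longrightarrow> map_poly \<sigma> (pcompose p q) = pcompose (map_poly \<sigma> p) (map_poly \<sigma> q)"
proof (induction p)
  case (pCons a p)
  then show ?case
    by (simp add: pcompose_pCons mp_add mp_mult map_poly_pCons fa_0 mp_const)
qed simp
lemma mp_pderiv: "field_aut \<sigma> \<Longrightarrow> map_poly \<sigma> (pderiv p) = pderiv (map_poly \<sigma> p)"
  by (intro poly_eqI) (simp add: coeff_map_poly coeff_pderiv fa_0 fa_mult fa_of_nat_Suc)
lemma mp_inv: "field_aut \<sigma> \<Longrightarrow> map_poly \<sigma> (map_poly (inv \<sigma>) p) = p"
proof -
  assume a: "field_aut \<sigma>"
  then have b: "bij \<sigma>" unfolding field_aut_def by blast
  have i0: "inv \<sigma> 0 = 0" using a b by (metis fa_0 bij_is_inj inv_f_f)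
  show ?thesis
    by (intro poly_eqI) (simp add: coeff_map_poly i0 a fa_0 b bij_is_surj surj_f_inv_f)
qed

lemma dvd_pcompose_diff: "((a::'a::field poly) - b) dvd (pcompose p a - pcompose p b)"
proof (induction p)
  case (pCons c p)
  have "pcompose (pCons c p) a - pcompose (pCons c p) b
     = a * (pcompose p a - pcompose p b) + (a - b) * pcompose p b"
    by (simp add: pcompose_pCons right_diff_distrib left_diff_distrib)
  then show ?case using pCons by (simp add: dvd_add)
qed simp

lemma taylor2: "((e::'a::field poly)^2) dvd (pcompose p (a + e) - pcompose p a - pcompose (pderiv p) a * e)"
proof (induction p)
  case (pCons c p)
  then obtain r where r: "pcompose p (a + e) - pcompose p a - pcompose (pderiv p) a * e = e^2 * r"
    by (auto elim: dvdE)
  have "pcompose (pCons c p) (a + e) - pcompose (pCons c p) a - pcompose (pderiv (pCons c p)) a * e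
      = e^2 * (pcompose (pderiv p) a + (a + e) * r)"
  proof -
    have eq: "pcompose p (a + e) = pcompose p a + pcompose (pderiv p) a * e + e^2 * r"
      using r by (simp add: algebra_simps)
    show ?thesis by (simp add: eq pcompose_pCons pderiv_pCons pcompose_add power2_eq_square algebra_simps)
  qed
  then show ?case by simp
qed simp

lemma sq_dvd_pderiv: "(P::'a::idom poly)^2 dvd r \<Longrightarrow> P dvd pderiv r"
  by (auto elim!: dvdE simp: pderiv_mult power2_eq_square)

lemma dvd_pderiv0: "pderiv (P::'a::idom poly) = 0 \<Longrightarrow> P dvd r \<Longrightarrow> P dvd pderiv r"
  by (auto elim!: dvdE simp: pderiv_mult)

lemma deg_pderiv_le: "degree (pderiv p) \<le> degree p - 1"
  by (rule degree_le) (auto simp: coeff_pderiv coeff_eq_0)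

lemma inv_mod:
  fixes P a :: "'a::field poly"
  assumes irr: "irreducible P" and nd: "\<not> P dvd a"
  shows "\<exists>u. P dvd u * a - 1"
proof -
  define S where "S = (\<lambda>b. b \<noteq> 0 \<and> (\<exists>u v. b = u * a + v * P))"
  have a0: "a \<noteq> 0" using nd by auto
  have "S a" unfolding S_def using a0 by (rule_tac conjI, simp, rule_tac x=1 in exI, rule_tac x=0 in exI, simp)
  then obtain b where Sb: "S b" and minb: "\<And>y. S y \<Longrightarrow> degree b \<le> degree y"
    using ex_has_least_nat[of S a degree] by blast
  obtain u v where uv: "b = u * a + v * P" and b0: "b \<noteq> 0" using Sb S_def by blast
  have closed: "c mod b = 0" if "c = u1 * a + v1 * P" for c u1 v1
  proof (rule ccontr)
    assume ne: "c mod b \<noteq> 0"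
    have "c mod b = c - (c div b) * b" by (simp add: minus_div_mult_eq_mod)
    also have "\<dots> = (u1 - (c div b) * u) * a + (v1 - (c div b) * v) * P"
      using that uv by (simp add: algebra_simps)
    finally have "S (c mod b)" using ne S_def by blast
    then have "degree b \<le> degree (c mod b)" by (rule minb)
    moreover have "degree (c mod b) < degree b" using degree_mod_less'[OF b0 ne] .
    ultimately show False by simp
  qed
  have "P mod b = 0" by (rule closed[of P 0 1]) simp
  then obtain c where Pc: "P = b * c" by (auto elim: dvdE simp: mod_eq_0_iff_dvd)
  have "a mod b = 0" by (rule closed[of a 1 0]) simp
  then have ba: "b dvd a" by (simp add: mod_eq_0_iff_dvd)
  have "is_unit b"
  proof (rule ccontr)
    assume "\<not> is_unit b"
    then have "is_unit c" using irr Pc by (auto simp: irreducible_def)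
    then have "P dvd b" using Pc by (simp add: mult_unit_dvd_iff)
    then have "P dvd a" using ba by (rule dvd_trans)
    then show False using nd by simp
  qed
  then obtain k where bk: "1 = b * k" by (auto elim: dvdE)
  have "(k * u) * a - 1 = - (k * v) * P" using uv bk by (simp add: algebra_simps)
  then show ?thesis by (rule_tac x="k * u" in exI) simp
qed

lemma prime_pow_cancel:
  fixes p t :: "'a::field poly"
  assumes p: "prime_elem p" and nt: "\<not> p dvd t"
  shows "p^m dvd t * x \<Longrightarrow> p^m dvd x"
proof (induction m arbitrary: x)
  case 0 then show ?case by simp
next
  case (Suc m)
  have "p dvd t * x" using Suc.prems by (metis dvd_power dvd_trans zero_less_Suc)
  then have "p dvd x" using p nt prime_elem_dvd_mult_iff by blast
  then obtain x1 where x: "x = p * x1" by (auto elim: dvdE)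
  have p0: "p \<noteq> 0" using p by auto
  have "p * p^m dvd p * (t * x1)" using Suc.prems x by (simp add: algebra_simps)
  then have "p^m dvd t * x1" using p0 by simp
  then have "p^m dvd x1" by (rule Suc.IH)
  then show ?case using x by simp
qed

locale qsetup =
  fixes P1 P2 Q :: "'a::field poly" and \<sigma> :: "'a \<Rightarrow> 'a"
  assumes fa: "field_aut \<sigma>" and irr1: "irreducible P1" and irr2: "irreducible P2"
  and inj: "\<And>w. P2 dvd pcompose (map_poly \<sigma> w) Q \<Longrightarrow> P1 dvd w"
  and surj: "\<And>y. \<exists>w. P2 dvd pcompose (map_poly \<sigma> w) Q - y"
  and hom0: "P2 dvd pcompose (map_poly \<sigma> P1) Q"
begin

definition phi where "phi w = pcompose (map_poly \<sigma> w) Q"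

lemma phi_add: "phi (a + b) = phi a + phi b"
  by (simp add: phi_def mp_add fa pcompose_add)
lemma phi_diff: "phi (a - b) = phi a - phi b"
  by (simp add: phi_def mp_diff fa pcompose_diff)
lemma phi_mult: "phi (a * b) = phi a * phi b"
  by (simp add: phi_def mp_mult fa pcompose_mult)
lemma phi_pow: "phi (a ^ k) = phi a ^ k"
  by (induction k) (simp_all add: phi_mult, simp add: phi_def fa fa_1 pcompose_1)
lemma phi_1: "phi 1 = 1"
  by (simp add: phi_def fa fa_1 pcompose_1)
lemma phi_const: "phi [:a:] = [:\<sigma> a:]"
  by (simp add: phi_def mp_const fa)
lemma phi_X: "phi [:0, 1:] = Q"
  by (simp add: phi_def map_poly_pCons fa fa_0 fa_1 pcompose_pCons)
lemma phi_comp: "phi (pcompose g h) = pcompose (map_poly \<sigma> g) (phi h)"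
  by (simp add: phi_def mp_pcompose fa pcompose_assoc)
lemma phi_pderiv: "pderiv (phi w) = phi (pderiv w) * pderiv Q"
  by (simp add: phi_def pderiv_pcompose mp_pderiv fa)

lemma prime1: "prime_elem P1" using irr1 by (rule field_poly_irreducible_imp_prime)
lemma prime2: "prime_elem P2" using irr2 by (rule field_poly_irreducible_imp_prime)
lemma nu1: "\<not> is_unit P1" using irr1 by (simp add: irreducible_def)
lemma nu2: "\<not> is_unit P2" using irr2 by (simp add: irreducible_def)
lemma nz2: "P2 \<noteq> 0" using irr2 by (auto simp: irreducible_def)
lemma nz1: "P1 \<noteq> 0" using irr1 by (auto simp: irreducible_def)

lemma injD: "P2 dvd phi w \<Longrightarrow> P1 dvd w" using inj by (simp add: phi_def)
lemma surjD: "\<exists>w. P2 dvd phi w - y" using surj by (simp add: phi_def)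
lemma hom0': "P2 dvd phi P1" using hom0 by (simp add: phi_def)

lemma phi_dvd: "P1 dvd w \<Longrightarrow> P2 dvd phi w"
  using hom0' by (auto elim!: dvdE simp: phi_mult)

lemma phi_cong: "P1^m dvd a - b \<Longrightarrow> P2^m dvd phi a - phi b"
proof -
  assume "P1^m dvd a - b"
  then obtain k where k: "a - b = P1^m * k" by (auto elim: dvdE)
  have "phi a - phi b = phi P1 ^ m * phi k" using k by (metis phi_diff phi_mult phi_pow)
  moreover have "P2^m dvd phi P1 ^ m" using hom0' by (simp add: dvd_power_same)
  ultimately show ?thesis by simp
qed

lemma key:
  assumes nd: "\<not> P2 dvd pderiv Q"
  shows "\<not> P2^2 dvd phi P1"
proof
  assume sq: "P2^2 dvd phi P1"
  have "P2 dvd phi (pderiv P1) * pderiv Q" using sq_dvd_pderiv[OF sq] by (simp add: phi_pderiv)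
  then have "P2 dvd phi (pderiv P1)" using nd prime2 prime_elem_dvd_mult_iff by blast
  then have dv: "P1 dvd pderiv P1" by (rule injD)
  have s1: "pderiv P1 = 0"
  proof (rule ccontr)
    assume "pderiv P1 \<noteq> 0"
    with dv have "degree P1 \<le> degree (pderiv P1)" by (rule dvd_imp_degree_le)
    moreover have "degree P1 > 0" using nu1 nz1 by (metis gr0I is_unit_iff_degree)
    moreover have "degree (pderiv P1) \<le> degree P1 - 1" by (rule deg_pderiv_le)
    ultimately show False by linarith
  qed
  obtain h where h: "P2 dvd phi h - [:0,1:]" using surjD by blast
  define M0 where "M0 = (phi h - [:0,1:]) div P2"
  have hM: "phi h = [:0,1:] + P2 * M0" using h by (simp add: M0_def)
  define g where "g = map_poly (inv \<sigma>) P2"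
  have g: "map_poly \<sigma> g = P2" by (simp add: g_def mp_inv fa)
  define U where "U = pcompose g h"
  have phiU: "phi U = pcompose P2 (phi h)" by (simp add: U_def phi_comp g)
  have "P2 dvd pcompose P2 (phi h) - pcompose P2 [:0,1:]"
    using dvd_trans[OF h dvd_pcompose_diff] by blast
  then have "P2 dvd pcompose P2 (phi h) - P2" by simp
  from dvd_add[OF this dvd_refl] have "P2 dvd pcompose P2 (phi h)" by simp
  then have "P1 dvd U" using phiU injD by simp
  then obtain U1 where "U = P1 * U1" by (auto elim: dvdE)
  then have "P2^2 dvd phi U" using sq by (simp add: phi_mult)
  then have A: "P2^2 dvd pcompose P2 ([:0,1:] + P2 * M0)" using phiU hM by simp
  have B: "P2^2 dvd pcompose P2 ([:0,1:] + P2 * M0) - P2 - pderiv P2 * (P2 * M0)"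
    using dvd_trans[OF _ taylor2[of "P2 * M0" P2 "[:0,1:]"]] by (simp add: power_mult_distrib)
  have "P2^2 dvd P2 + pderiv P2 * (P2 * M0)"
    using dvd_diff[OF A B] by simp
  then have "P2 * P2 dvd P2 * (1 + pderiv P2 * M0)"
    by (simp add: power2_eq_square algebra_simps)
  then have C: "P2 dvd 1 + pderiv P2 * M0" using nz2 by simp
  have s3: "\<not> P2 dvd pderiv P2"
  proof
    assume "P2 dvd pderiv P2"
    then have "P2 dvd pderiv P2 * M0" by simp
    from dvd_diff[OF C this] have "P2 dvd 1" by simp
    then show False using nu2 by simp
  qed
  have "P1 dvd pderiv U" using dvd_pderiv0[OF s1 \<open>P1 dvd U\<close>] .
  then have D: "P1 dvd pcompose (pderiv g) h * pderiv h" by (simp add: U_def pderiv_pcompose)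
  have phig': "phi (pcompose (pderiv g) h) = pcompose (pderiv P2) (phi h)"
    by (simp add: phi_comp mp_pderiv fa g)
  have "\<not> P2 dvd pcompose (pderiv P2) (phi h)"
  proof
    assume a: "P2 dvd pcompose (pderiv P2) (phi h)"
    have "P2 dvd pcompose (pderiv P2) (phi h) - pcompose (pderiv P2) [:0,1:]"
      using dvd_trans[OF h dvd_pcompose_diff] by blast
    then have "P2 dvd pcompose (pderiv P2) (phi h) - pderiv P2" by simp
    from dvd_diff[OF a this] have "P2 dvd pderiv P2" by simp
    then show False using s3 by simp
  qed
  then have "\<not> P1 dvd pcompose (pderiv g) h" using phi_dvd[of "pcompose (pderiv g) h"] phig' by auto
  then have E: "P1 dvd pderiv h" using D prime1 prime_elem_dvd_mult_iff by blast
  define q0 where "q0 = map_poly (inv \<sigma>) Q"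
  have q0: "map_poly \<sigma> q0 = Q" by (simp add: q0_def mp_inv fa)
  have "P2 dvd pcompose Q (phi h) - pcompose Q [:0,1:]"
    using dvd_trans[OF h dvd_pcompose_diff] by blast
  then have "P2 dvd phi (pcompose q0 h - [:0,1:])"
    by (simp add: phi_diff phi_comp q0 phi_X)
  then have "P1 dvd pcompose q0 h - [:0,1:]" by (rule injD)
  then have "P1 dvd pderiv (pcompose q0 h - [:0,1:])" by (rule dvd_pderiv0[OF s1])
  moreover have "pderiv [:0,1:] = (1::'a poly)" by (simp add: pderiv_pCons one_pCons)
  ultimately have F: "P1 dvd pcompose (pderiv q0) h * pderiv h - 1"
    by (simp add: pderiv_diff pderiv_pcompose)
  have "P1 dvd pcompose (pderiv q0) h * pderiv h" using E by simp
  from dvd_diff[OF this F] have "P1 dvd 1" by simp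
  then show False using nu1 by simp
qed

lemma T1_ex: assumes nd: "\<not> P2 dvd pderiv Q"
  obtains T1 where "phi P1 = P2 * T1" "\<not> P2 dvd T1"
proof -
  obtain T1 where t: "phi P1 = P2 * T1" using hom0' by (auto elim: dvdE)
  have "\<not> P2 dvd T1"
  proof
    assume "P2 dvd T1"
    then have "P2^2 dvd phi P1" using t by (simp add: power2_eq_square)
    then show False using key[OF nd] by simp
  qed
  then show ?thesis using t that by blast
qed

lemma inj_pow:
  assumes nd: "\<not> P2 dvd pderiv Q"
  shows "P2^m dvd phi w \<Longrightarrow> P1^m dvd w"
proof (induction m arbitrary: w)
  case 0
  then show ?case by simp
next
  case (Suc m)
  obtain T1 where t: "phi P1 = P2 * T1" and nt: "\<not> P2 dvd T1" using T1_ex[OF nd] by blast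
  have "P2 dvd phi w" using Suc.prems by (metis dvd_power dvd_trans zero_less_Suc)
  then have "P1 dvd w" by (rule injD)
  then obtain w1 where w: "w = P1 * w1" by (auto elim: dvdE)
  have "P2 * P2^m dvd P2 * (T1 * phi w1)" using Suc.prems w t by (simp add: phi_mult mult.assoc)
  then have "P2^m dvd T1 * phi w1" using nz2 by simp
  then have "P2^m dvd phi w1" using prime_pow_cancel[OF prime2 nt] by blast
  then have "P1^m dvd w1" by (rule Suc.IH)
  then show ?case using w by simp
qed

lemma surj_pow:
  assumes nd: "\<not> P2 dvd pderiv Q"
  shows "\<exists>w. P2^m dvd phi w - y"
proof (induction m arbitrary: y)
  case 0
  then show ?case by simp
next
  case (Suc m)
  obtain T1 where t: "phi P1 = P2 * T1" and nt: "\<not> P2 dvd T1" using T1_ex[OF nd] by blast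
  obtain w where "P2^m dvd phi w - y" using Suc.IH by blast
  then obtain E where wE: "phi w - y = P2^m * E" by (auto elim: dvdE)
  have "\<not> P2 dvd T1^m" using nt prime2 prime_elem_dvd_power by blast
  then obtain u where u: "P2 dvd u * T1^m - 1" using inv_mod[OF irr2] by blast
  obtain c where c: "P2 dvd phi c - E * u" using surjD by blast
  have eq1: "phi (w - P1^m * c) - y = P2^m * (E - T1^m * phi c)"
    using wE t by (simp add: phi_diff phi_mult phi_pow power_mult_distrib algebra_simps)
  have eq2: "E - T1^m * phi c = - (E * (u * T1^m - 1)) - T1^m * (phi c - E * u)"
    by (simp add: algebra_simps)
  have "P2 dvd E - T1^m * phi c" unfolding eq2 using u c by (simp add: dvd_diff)
  then have "P2^Suc m dvd phi (w - P1^m * c) - y" unfolding eq1 by (simp add: mult_dvd_mono mult.commute)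
  then show ?case by blast
qed

end

lemma const_mod: "irreducible (P::'a::field poly) \<Longrightarrow> [:c:] mod P = [:c:]"
proof -
  assume irr: "irreducible P"
  have "P \<noteq> 0" "\<not> is_unit P" using irr by (auto simp: irreducible_def)
  then have "degree P > 0" by (metis gr0I is_unit_iff_degree)
  then show ?thesis by (simp add: mod_poly_less)
qed

theorem mainTheorem13:
  fixes P1 P2 :: "'a::field poly" and f :: "'a poly \<Rightarrow> 'a poly" and n :: nat
  assumes "irreducible P1" and "irreducible P2" and "n > 1"
    and "qring_iso P1 P2 f" and "stabilizes_K P2 f"
  shows "qring_iso (P1 ^ n) (P2 ^ n) (f_Xn P1 P2 f n) \<and> stabilizes_K (P2 ^ n) (f_Xn P1 P2 f n)
     \<longleftrightarrow> pderiv (Q_f P2 f) \<noteq> 0"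
proof -
  note irr1 = assms(1) and irr2 = assms(2)
  have hom: "qring_hom P1 P2 f" and bij: "bij_betw f (qcarrier P1) (qcarrier P2)"
    using assms(4) by (auto simp: qring_iso_def)
  have f_cls: "\<And>p. f p = f (p mod P1)" and f_red: "\<And>p. f p mod P2 = f p"
    and f_add: "\<And>p q. f (p + q) = f p + f q" and f_mult: "\<And>p q. f (p * q) = (f p * f q) mod P2"
    using hom by (auto simp: qring_hom_def)
  have "f 0 + f 0 = f 0 + 0" using f_add[of 0 0] by simp
  then have f0: "f 0 = 0" by (rule add_left_imp_eq)
  have P2nz: "P2 \<noteq> 0" and P2nu: "\<not> is_unit P2" using irr2 by (auto simp: irreducible_def)
  have degP2: "degree P2 > 0" using P2nz P2nu by (metis gr0I is_unit_iff_degree)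
  define \<sigma> where "\<sigma> = sigma_f P2 f"
  have ex1: "\<exists>!\<tau>. field_aut \<tau> \<and> (\<forall>a. f [:a:] = [:\<tau> a:] mod P2)"
  proof -
    obtain \<tau> where t: "field_aut \<tau> \<and> (\<forall>a. f [:a:] = [:\<tau> a:] mod P2)"
      using assms(5) by (auto simp: stabilizes_K_def)
    have "\<tau>' = \<tau>" if "field_aut \<tau>' \<and> (\<forall>a. f [:a:] = [:\<tau>' a:] mod P2)" for \<tau>'
    proof
      fix a show "\<tau>' a = \<tau> a" using that t const_mod[OF irr2] by (metis pCons_eq_iff)
    qed
    then show ?thesis using t by blast
  qed
  have \<sigma>: "field_aut \<sigma> \<and> (\<forall>a. f [:a:] = [:\<sigma> a:] mod P2)"
    unfolding \<sigma>_def sigma_f_def by (rule theI'[OF ex1])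
  then have fa: "field_aut \<sigma>" and fc: "\<And>a. f [:a:] = [:\<sigma> a:]"
    using const_mod[OF irr2] by auto
  define Q where "Q = Q_f P2 f"
  have QX: "Q = f [:0,1:]"
  proof -
    have c: "(f [:0,1:] = 0 \<or> degree (f [:0,1:]) < degree P2) \<and> f [:0, 1:] mod P2 = f [:0,1:] mod P2"
      using f_red[of "[:0,1:]"] degree_mod_less[OF P2nz, of "f [:0,1:]"] by simp
    have u: "Q' = f [:0,1:]" if "(Q' = 0 \<or> degree Q' < degree P2) \<and> f [:0, 1:] mod P2 = Q' mod P2" for Q'
    proof -
      have "Q' mod P2 = Q'" using that by (auto simp: mod_poly_less)
      then show ?thesis using that f_red[of "[:0,1:]"] by simp
    qed
    show ?thesis unfolding Q_def Q_f_def
      by (rule the_equality) (use c u in auto)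
  qed
  define phi0 where "phi0 w = pcompose (map_poly \<sigma> w) Q" for w
  have f_phi: "f h = phi0 h mod P2" for h
  proof (induction h)
    case 0 then show ?case by (simp add: f0 phi0_def)
  next
    case (pCons a h)
    have "pCons a h = [:a:] + [:0,1:] * h" by simp
    then have "f (pCons a h) = [:\<sigma> a:] + (Q * (phi0 h mod P2)) mod P2"
      by (metis f_add f_mult fc QX pCons.IH)
    also have "\<dots> = ([:\<sigma> a:] + Q * phi0 h) mod P2"
      by (simp add: mod_mult_right_eq poly_mod_add_left const_mod[OF irr2])
    also have "\<dots> = phi0 (pCons a h) mod P2"
      by (simp add: phi0_def map_poly_pCons fa fa_0 pcompose_pCons)
    finally show ?case .
  qed
  interpret qsetup P1 P2 Q \<sigma>
  proof
    show "field_aut \<sigma>" by (rule fa)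
    show "irreducible P1" "irreducible P2" by (rule irr1, rule irr2)
  next
    fix w assume "P2 dvd pcompose (map_poly \<sigma> w) Q"
    then have "f w = 0" using f_phi[of w] by (simp add: phi0_def)
    then have "f (w mod P1) = f (0 mod P1)" using f_cls f0 by simp
    moreover have "w mod P1 \<in> qcarrier P1" "0 mod P1 \<in> qcarrier P1" unfolding qcarrier_def by (rule rangeI)+
    ultimately have "w mod P1 = 0 mod P1" using bij by (auto simp: bij_betw_def inj_on_def)
    then show "P1 dvd w" by (simp add: mod_eq_0_iff_dvd)
  next
    fix y
    have "y mod P2 \<in> qcarrier P2" unfolding qcarrier_def by (rule rangeI)
    then have "y mod P2 \<in> f ` qcarrier P1" using bij by (simp add: bij_betw_def)
    then obtain x where "y mod P2 = f x" by (rule imageE)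
    then have "phi0 x mod P2 = y mod P2" using f_phi by simp
    then show "\<exists>w. P2 dvd pcompose (map_poly \<sigma> w) Q - y"
      by (auto simp: mod_eq_dvd_iff phi0_def)
  next
    have "f P1 = 0" using f_cls[of P1] f0 by simp
    then show "P2 dvd pcompose (map_poly \<sigma> P1) Q" using f_phi[of P1]
      by (simp add: phi0_def mod_eq_0_iff_dvd)
  qed
  have phi0_eq: "phi0 = phi" by (auto simp: phi0_def phi_def)
  define N where "N = P1 ^ n"
  define M where "M = P2 ^ n"
  define F where "F = f_Xn P1 P2 f n"
  have Fd: "F p = phi (p mod N) mod M" for p
  proof -
    have "F p = phi0 (p mod N) mod M"
      unfolding phi0_def F_def f_Xn_def N_def M_def \<sigma>_def Q_def ..
    then show ?thesis using phi0_eq by simp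
  qed
  have sqM: "P2^2 dvd M" unfolding M_def using assms(3) by (simp add: le_imp_power_dvd)
  have main: "qring_iso N M F \<and> stabilizes_K M F \<longleftrightarrow> pderiv Q \<noteq> 0"
  proof
    assume H: "qring_iso N M F \<and> stabilizes_K M F"
    show "pderiv Q \<noteq> 0"
    proof
      assume dQ: "pderiv Q = 0"
      have "[:0,1:] mod M \<in> qcarrier M" unfolding qcarrier_def by (rule rangeI)
      then have "[:0,1:] mod M \<in> F ` qcarrier N" using H by (simp add: qring_iso_def bij_betw_def)
      then obtain x where x: "[:0,1:] mod M = F x" by (rule imageE)
      then have "phi (x mod N) mod M = [:0,1:] mod M" using Fd by simp
      then have "M dvd phi (x mod N) - [:0,1:]" by (simp add: mod_eq_dvd_iff)
      then have "P2^2 dvd phi (x mod N) - [:0,1:]" using sqM dvd_trans by blast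
      then have "P2 dvd pderiv (phi (x mod N) - [:0,1:])" by (rule sq_dvd_pderiv)
      moreover have "pderiv (phi (x mod N) - [:0,1:]) = - 1"
        using dQ by (simp add: pderiv_diff phi_pderiv pderiv_pCons one_pCons)
      ultimately have "P2 dvd 1" by simp
      then show False using P2nu by simp
    qed
  next
    assume dQ: "pderiv Q \<noteq> 0"
    have nd: "\<not> P2 dvd pderiv Q"
    proof
      assume d: "P2 dvd pderiv Q"
      have "degree P2 \<le> degree (pderiv Q)" using dvd_imp_degree_le[OF d dQ] .
      moreover have "degree (pderiv Q) \<le> degree Q - 1" by (rule deg_pderiv_le)
      moreover have "Q \<noteq> 0" using dQ by auto
      moreover have "degree Q < degree P2"
        using degree_mod_less'[OF P2nz, of "f [:0,1:]"] f_red[of "[:0,1:]"] QX \<open>Q \<noteq> 0\<close> by simp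
      ultimately show False by linarith
    qed
    have degP1: "degree P1 > 0" using nz1 nu1 by (metis gr0I is_unit_iff_degree)
    have degN: "degree N > 0" unfolding N_def using degree_power_eq[OF nz1, of n] degP1 assms(3) by simp
    have Nc: "[:c:] mod N = [:c:]" for c using degN by (simp add: mod_poly_less)
    have h1: "F p = F (p mod N)" for p by (simp add: Fd)
    have h2: "F p mod M = F p" for p by (simp add: Fd)
    have h3: "F 1 = 1 mod M" using Nc[of 1] by (simp add: Fd phi_1 one_pCons[symmetric])
    have h4: "F (p + q) = F p + F q" for p q by (simp add: Fd poly_mod_add_left phi_add)
    have h5: "F (p * q) = (F p * F q) mod M" for p q
    proof -
      have "N dvd (p*q) mod N - (p mod N)*(q mod N)"
        by (simp add: mod_eq_dvd_iff[symmetric] mod_mult_eq)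
      then have "M dvd phi ((p*q) mod N) - phi ((p mod N)*(q mod N))"
        using phi_cong N_def M_def by blast
      then have "phi ((p*q) mod N) mod M = phi ((p mod N)*(q mod N)) mod M" by (simp add: mod_eq_dvd_iff)
      then show ?thesis by (simp add: Fd phi_mult mod_mult_eq)
    qed
    have hom: "qring_hom N M F" unfolding qring_hom_def using h1 h2 h3 h4 h5 by blast
    have inj: "inj_on F (qcarrier N)"
    proof (rule inj_onI)
      fix x y assume x: "x \<in> qcarrier N" and y: "y \<in> qcarrier N" and e: "F x = F y"
      have xr: "x mod N = x" using x by (auto simp: qcarrier_def)
      have yr: "y mod N = y" using y by (auto simp: qcarrier_def)
      have "phi x mod M = phi y mod M" using e xr yr by (simp add: Fd)
      then have "P2^n dvd phi (x - y)" by (simp add: mod_eq_dvd_iff phi_diff M_def)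
      then have "P1^n dvd x - y" by (rule inj_pow[OF nd])
      then have "x mod N = y mod N" by (simp add: mod_eq_dvd_iff N_def)
      then show "x = y" using xr yr by simp
    qed
    have img: "F ` qcarrier N = qcarrier M"
    proof
      show "F ` qcarrier N \<subseteq> qcarrier M" by (auto simp: qcarrier_def Fd)
    next
      show "qcarrier M \<subseteq> F ` qcarrier N"
      proof
        fix y assume "y \<in> qcarrier M"
        then have yr: "y mod M = y" by (auto simp: qcarrier_def)
        obtain w where w: "P2^n dvd phi w - y" using surj_pow[OF nd] by blast
        have "P1^n dvd (w mod N) - w" by (simp add: mod_eq_dvd_iff[symmetric] N_def)
        then have "P2^n dvd phi (w mod N) - phi w" by (rule phi_cong)
        from dvd_add[OF this w] have "M dvd phi (w mod N) - y" by (simp add: M_def)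
        then have "F (w mod N) = y" using yr by (simp add: Fd mod_eq_dvd_iff[symmetric])
        moreover have "w mod N \<in> qcarrier N" unfolding qcarrier_def by (rule rangeI)
        ultimately show "y \<in> F ` qcarrier N" by (metis imageI)
      qed
    qed
    have stab: "stabilizes_K M F" unfolding stabilizes_K_def
      using fa by (intro exI[of _ \<sigma>]) (simp add: Fd Nc phi_const)
    show "qring_iso N M F \<and> stabilizes_K M F"
      using hom inj img stab by (simp add: qring_iso_def bij_betw_def)
  qed
  then show ?thesis by (simp add: N_def M_def F_def Q_def)
qed

end
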